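(* Let $\Gamma$ be a weighted digraph with vertex set $\{1,\dots,n\}$, $n>1$, without loops and with strictly positive arc weights, with Laplacian matrix $L$, in-forest dimension $d$, and let $\tilde J=\sigma_{n-d}^{-1}Q_{n-d}$. Then $$\tilde J=\lim_{\tau\to\infty}J(\tau)=\lim_{\tau\to\infty}(I+\tau L)^{-1}.$$
   Context: $W=(w_{ij})$ is the matrix of arc weights ($w_{ij}>0$ iff there is an arc $i\to j$, else $0$). The Laplacian $L=(\ell_{ij})$: $\ell_{ij}=-w_{ij}$ for $j\ne i$, $\ell_{ii}=\sum_{k\ne i}w_{ik}$. The weight of a subgraph is the product of its arc weights (1 if no arcs); the weight of a set of subgraphs is the sum of their weights. A converging tree is a weakly connected digraph with one vertex (the root) of outdegree 0 and all others of outdegree 1; an in-forest is a spanning subgraph of $\Gamma$ whose weak components are converging trees. The in-forest dimension $d$ is the minimal number of trees in an in-forest (so in-forests have at most $n-d$ arcs). $\sigma_k$ is the total weight of in-forests with $k$ arcs; $Q_k=(q^k_{ij})$ with $q^k_{ij}$ the total weight of in-forests with $k$ arcs in which $i$ lies in a tree rooted at $j$. For $\tau\ge0$, $Q(\tau)=\sum_{k=0}^{n-d}Q_k\tau^k$, $\sigma(\tau)=\sum_{k=0}^{n-d}\sigma_k\tau^k$ and $J(\tau)=\sigma(\tau)^{-1}Q(\tau)$. *)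

theory Defs
  imports "HOL-Analysis.Analysis"
begin

text \<open>Weighted digraph on the finite vertex type 'n, given by its weight matrix W:
  there is an arc i -> j iff W i j > 0.\<close>

definition arcs :: "real^'n^'n \<Rightarrow> ('n \<times> 'n) set" where
  "arcs W = {(i,j). W$i$j > 0}"

definition laplacian :: "real^'n^'n \<Rightarrow> real^'n^'n" where
  "laplacian W = (\<chi> i j. if i = j then (\<Sum>k\<in>UNIV - {i}. W$i$k) else - W$i$j)"

definition outdeg :: "('n \<times> 'n) set \<Rightarrow> 'n \<Rightarrow> nat" where
  "outdeg F i = card {j. (i,j) \<in> F}"

definition weakly_conn :: "('n \<times> 'n) set \<Rightarrow> ('n \<times> 'n) set" where
  "weakly_conn F = (F \<union> F\<inverse>)\<^sup>*"

definition converging_tree :: "'n set \<Rightarrow> ('n \<times> 'n) set \<Rightarrow> bool" where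
  "converging_tree V F \<longleftrightarrow>
     (let A = F \<inter> (V \<times> V) in
        V \<noteq> {} \<and> (\<forall>x\<in>V. \<forall>y\<in>V. (x,y) \<in> (A \<union> A\<inverse>)\<^sup>*) \<and>
        (\<exists>r\<in>V. outdeg A r = 0 \<and> (\<forall>v\<in>V. v \<noteq> r \<longrightarrow> outdeg A v = 1)))"

definition in_forest :: "real^'n^'n \<Rightarrow> ('n \<times> 'n) set \<Rightarrow> bool" where
  "in_forest W F \<longleftrightarrow> F \<subseteq> arcs W \<and>
     (\<forall>C \<in> UNIV // weakly_conn F. converging_tree C F)"

definition num_trees :: "('n \<times> 'n) set \<Rightarrow> nat" where
  "num_trees F = card (UNIV // weakly_conn F)"

definition forest_dim :: "real^'n^'n \<Rightarrow> nat" where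
  "forest_dim W = Min (num_trees ` {F. in_forest W F})"

definition weight :: "real^'n^'n \<Rightarrow> ('n \<times> 'n) set \<Rightarrow> real" where
  "weight W F = (\<Prod>(i,j)\<in>F. W$i$j)"

definition sigma :: "real^'n^'n \<Rightarrow> nat \<Rightarrow> real" where
  "sigma W k = (\<Sum>F\<in>{F. in_forest W F \<and> card F = k}. weight W F)"

definition in_tree_rooted_at :: "('n \<times> 'n) set \<Rightarrow> 'n \<Rightarrow> 'n \<Rightarrow> bool" where
  "in_tree_rooted_at F i j \<longleftrightarrow> (i,j) \<in> weakly_conn F \<and> outdeg F j = 0"

definition Qmat :: "real^'n^'n \<Rightarrow> nat \<Rightarrow> real^'n^'n" where
  "Qmat W k = (\<chi> i j. \<Sum>F\<in>{F. in_forest W F \<and> card F = k \<and> in_tree_rooted_at F i j}. weight W F)"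

definition sigma_poly :: "real^'n^'n \<Rightarrow> real \<Rightarrow> real" where
  "sigma_poly W \<tau> = (\<Sum>k\<le>CARD('n) - forest_dim W. sigma W k * \<tau> ^ k)"

definition Q_poly :: "real^'n^'n \<Rightarrow> real \<Rightarrow> real^'n^'n" where
  "Q_poly W \<tau> = (\<Sum>k\<le>CARD('n) - forest_dim W. (\<tau> ^ k) *\<^sub>R Qmat W k)"

definition Jmat :: "real^'n^'n \<Rightarrow> real \<Rightarrow> real^'n^'n" where
  "Jmat W \<tau> = inverse (sigma_poly W \<tau>) *\<^sub>R Q_poly W \<tau>"

definition Jtilde :: "real^'n^'n \<Rightarrow> real^'n^'n" where
  "Jtilde W = inverse (sigma W (CARD('n) - forest_dim W)) *\<^sub>R Qmat W (CARD('n) - forest_dim W)"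

end

theory Submission
  imports Defs
begin

definition detr :: "('n \<times> 'n) set \<Rightarrow> bool" where
  "detr F \<longleftrightarrow> (\<forall>a b c. (a,b) \<in> F \<longrightarrow> (a,c) \<in> F \<longrightarrow> b = c)"

definition ff :: "real^'n^'n \<Rightarrow> ('n \<times> 'n) set \<Rightarrow> bool" where
  "ff W F \<longleftrightarrow> F \<subseteq> arcs W \<and> detr F \<and> acyclic F"

definition isroot :: "('n \<times> 'n) set \<Rightarrow> 'n \<Rightarrow> bool" where
  "isroot F r \<longleftrightarrow> (\<forall>j. (r,j) \<notin> F)"

lemma outdeg0_iff: "outdeg F (v::'n::finite) = 0 \<longleftrightarrow> isroot F v"
  unfolding outdeg_def isroot_def by auto

lemma outdeg_le1_iff: "outdeg F (v::'n::finite) \<le> 1 \<longleftrightarrow> (\<forall>b c. (v,b) \<in> F \<longrightarrow> (v,c) \<in> F \<longrightarrow> b = c)"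
  unfolding outdeg_def by (simp add: card_le_Suc0_iff_eq)

lemma detr_outdeg: "detr F \<longleftrightarrow> (\<forall>v::'n::finite. outdeg F v \<le> 1)"
  unfolding detr_def outdeg_le1_iff by blast

lemma det_step: "detr F \<Longrightarrow> (a,b) \<in> F \<Longrightarrow> (a,c) \<in> F \<Longrightarrow> b = c"
  unfolding detr_def by blast

lemma wc_root_reach:
  assumes d: "detr F" and r: "isroot F j" and x: "(x,j) \<in> weakly_conn F"
  shows "(x,j) \<in> F\<^sup>*"
proof -
  have "(x,j) \<in> (F \<union> F\<inverse>)\<^sup>*" using x by (simp add: weakly_conn_def)
  then show ?thesis
  proof (induction rule: converse_rtrancl_induct)
    case base then show ?case by simp
  next
    case (step x y)
    show ?case
    proof (cases "(x,y) \<in> F")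
      case True show ?thesis by (rule converse_rtrancl_into_rtrancl[OF True step.IH])
    next
      case False
      then have yx: "(y,x) \<in> F" using step.hyps(1) by auto
      from step.IH show ?thesis
      proof (cases rule: converse_rtranclE)
        case base then show ?thesis using yx r unfolding isroot_def by blast
      next
        case (step z)
        have "z = x" using det_step[OF d step(1) yx] .
        then show ?thesis using step(2) by simp
      qed
    qed
  qed
qed

lemma reach_wc: "(x,y) \<in> F\<^sup>* \<Longrightarrow> (x,y) \<in> weakly_conn F"
  unfolding weakly_conn_def using rtrancl_mono[of F "F \<union> F\<inverse>"] by blast

lemma wc_sym: "(x,y) \<in> weakly_conn F \<Longrightarrow> (y,x) \<in> weakly_conn F"
proof -
  assume "(x,y) \<in> weakly_conn F"
  then have "(y,x) \<in> ((F \<union> F\<inverse>)\<inverse>)\<^sup>*" unfolding weakly_conn_def by (rule rtrancl_converseI)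
  moreover have "(F \<union> F\<inverse>)\<inverse> = F \<union> F\<inverse>" by auto
  ultimately show ?thesis unfolding weakly_conn_def by simp
qed

lemma wc_trans: "(x,y) \<in> weakly_conn F \<Longrightarrow> (y,z) \<in> weakly_conn F \<Longrightarrow> (x,z) \<in> weakly_conn F"
  unfolding weakly_conn_def by (rule rtrancl_trans)

lemma wc_refl: "(x,x) \<in> weakly_conn F"
  unfolding weakly_conn_def by simp

lemma wc_equiv: "equiv UNIV (weakly_conn F)"
proof (rule equivI)
  show "weakly_conn F \<subseteq> UNIV \<times> UNIV" by simp
  show "refl_on UNIV (weakly_conn F)" by (rule refl_onI) (rule wc_refl)
  show "sym (weakly_conn F)" by (rule symI) (rule wc_sym)
  show "trans (weakly_conn F)" by (rule transI) (rule wc_trans)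
qed

lemma root_unique:
  assumes "detr F" "isroot F r" "isroot F s" "(r,s) \<in> weakly_conn F"
  shows "r = s"
proof -
  have "(r,s) \<in> F\<^sup>*" using wc_root_reach[OF assms(1) assms(3) assms(4)] .
  then show ?thesis
  proof (cases rule: converse_rtranclE)
    case base then show ?thesis by simp
  next
    case (step z) then show ?thesis using assms(2) unfolding isroot_def by blast
  qed
qed

lemma exists_root:
  assumes "acyclic (F::('n::finite \<times> 'n) set)"
  shows "\<exists>r. (x,r) \<in> F\<^sup>* \<and> isroot F r"
proof -
  have "wf (F\<inverse>)"
    using assms by (simp add: acyclic_converse finite_acyclic_wf)
  then show ?thesis
  proof (induction x rule: wf_induct_rule)
    case (less x)
    show ?case
    proof (cases "isroot F x")
      case True then show ?thesis by auto
    next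
      case False
      then obtain y where "(x,y) \<in> F" by (auto simp: isroot_def)
      with less obtain r where "(y,r) \<in> F\<^sup>*" "isroot F r" by auto
      then show ?thesis using converse_rtrancl_into_rtrancl[OF \<open>(x,y) \<in> F\<close>] by blast
    qed
  qed
qed


lemma same_class:
  assumes "y \<in> weakly_conn F `` {x}" "z \<in> weakly_conn F `` {x}"
  shows "(y,z) \<in> weakly_conn F"
proof -
  have a: "(x,y) \<in> weakly_conn F" and b: "(x,z) \<in> weakly_conn F" using assms by auto
  show ?thesis by (rule wc_trans[OF wc_sym[OF a] b])
qed

lemma comp_closed:
  assumes "C = weakly_conn F `` {x}" "v \<in> C" "(v,j) \<in> F"
  shows "j \<in> C"
proof -
  have "(v,j) \<in> weakly_conn F" unfolding weakly_conn_def using assms(3) by blast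
  then show ?thesis using assms(1,2) wc_trans[of x v F j] by blast
qed

lemma outdeg_comp:
  assumes "C = weakly_conn F `` {x}" "v \<in> C"
  shows "outdeg (F \<inter> C \<times> C) v = outdeg F v"
proof -
  have "{j. (v,j) \<in> F \<inter> C \<times> C} = {j. (v,j) \<in> F}"
    using comp_closed[OF assms] assms(2) by blast
  then show ?thesis unfolding outdeg_def by simp
qed

lemma conn_comp:
  assumes C: "C = weakly_conn F `` {x}" and y: "y \<in> C" and yz: "(y,z) \<in> (F \<union> F\<inverse>)\<^sup>*"
  shows "(y,z) \<in> ((F \<inter> C \<times> C) \<union> (F \<inter> C \<times> C)\<inverse>)\<^sup>*"
  using yz
proof (induction rule: rtrancl_induct)
  case base then show ?case by simp
next
  case (step z z')
  have zC: "z \<in> C"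
  proof -
    have "(y,z) \<in> weakly_conn F" using step.hyps(1) by (simp add: weakly_conn_def)
    then show ?thesis using C y wc_trans[of x y F z] by blast
  qed
  have "(z,z') \<in> weakly_conn F" using step.hyps(2) unfolding weakly_conn_def by blast
  then have z'C: "z' \<in> C" using zC C wc_trans[of x z F z'] by blast
  have "(z,z') \<in> (F \<inter> C \<times> C) \<union> (F \<inter> C \<times> C)\<inverse>" using step.hyps(2) zC z'C by blast
  then show ?case using step.IH by (rule rtrancl_into_rtrancl[rotated])
qed

lemma ff_in_forest:
  fixes F :: "('n::finite \<times> 'n) set"
  assumes "ff W F" shows "in_forest W F"
proof -
  have sub: "F \<subseteq> arcs W" and d: "detr F" and ac: "acyclic F" using assms unfolding ff_def by auto
  have "converging_tree C F" if Cq: "C \<in> UNIV // weakly_conn F" for C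
  proof -
    obtain x where C: "C = weakly_conn F `` {x}" using Cq unfolding quotient_def by blast
    define A where "A = F \<inter> C \<times> C"
    have xC: "x \<in> C" unfolding C using wc_refl[of x F] by simp
    have conn: "\<forall>y\<in>C. \<forall>z\<in>C. (y,z) \<in> (A \<union> A\<inverse>)\<^sup>*"
    proof (intro ballI)
      fix y z assume yC: "y \<in> C" and zC: "z \<in> C"
      have "(y,z) \<in> weakly_conn F" using same_class[of y F x z] yC zC C by simp
      then have "(y,z) \<in> (F \<union> F\<inverse>)\<^sup>*" unfolding weakly_conn_def .
      from conn_comp[OF C yC this] show "(y,z) \<in> (A \<union> A\<inverse>)\<^sup>*" unfolding A_def .
    qed
    obtain r where xr: "(x,r) \<in> F\<^sup>*" and r: "isroot F r" using exists_root[OF ac, of x] by blast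
    have rC: "r \<in> C" unfolding C using reach_wc[OF xr] by simp
    have r0: "outdeg A r = 0" unfolding A_def outdeg_comp[OF C rC] using r outdeg0_iff[of F r] by simp
    have o1: "outdeg A v = 1" if vC: "v \<in> C" and vr: "v \<noteq> r" for v
    proof -
      have e: "outdeg A v = outdeg F v" unfolding A_def using outdeg_comp[OF C vC] .
      have le: "outdeg F v \<le> 1" using d detr_outdeg[of F] by simp
      have "outdeg F v \<noteq> 0"
      proof
        assume "outdeg F v = 0"
        then have rv: "isroot F v" using outdeg0_iff[of F v] by simp
        have "(v,r) \<in> weakly_conn F" using same_class[of v F x r] vC rC C by simp
        from root_unique[OF d rv r this] show False using vr by simp
      qed
      then show ?thesis using e le by linarith
    qed
    have "C \<noteq> {}" using xC by auto
    then show ?thesis unfolding converging_tree_def Let_def A_def[symmetric]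
      using conn rC r0 o1 by blast
  qed
  then show ?thesis unfolding in_forest_def using sub by blast
qed

lemma cyc_prop:
  assumes d: "detr F" and c: "(x,x) \<in> F\<^sup>+" and xy: "(x,y) \<in> F\<^sup>*"
  shows "(y,y) \<in> F\<^sup>+"
  using xy
proof (induction rule: rtrancl_induct)
  case base then show ?case using c .
next
  case (step y z)
  from tranclD[OF step.IH] obtain z' where yz': "(y,z') \<in> F" and z'y: "(z',y) \<in> F\<^sup>*"
    by blast
  have "z' = z" using det_step[OF d yz' step.hyps(2)] .
  then have "(z,y) \<in> F\<^sup>*" using z'y by simp
  from rtrancl_into_trancl1[OF this step.hyps(2)] show ?case .
qed

lemma in_forest_ff:
  fixes F :: "('n::finite \<times> 'n) set"
  assumes "in_forest W F" shows "ff W F"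
proof -
  have sub: "F \<subseteq> arcs W" and ct: "\<And>C. C \<in> UNIV // weakly_conn F \<Longrightarrow> converging_tree C F"
    using assms unfolding in_forest_def by auto
  have rootC: "\<exists>r\<in>C. isroot F r \<and> (\<forall>v\<in>C. v \<noteq> r \<longrightarrow> outdeg F v = 1)"
    if C: "C = weakly_conn F `` {x}" for C x
  proof -
    have "C \<in> UNIV // weakly_conn F" unfolding C by (rule quotientI) simp
    then have "converging_tree C F" by (rule ct)
    then obtain r where rC: "r \<in> C" and r0: "outdeg (F \<inter> C \<times> C) r = 0"
      and o1: "\<forall>v\<in>C. v \<noteq> r \<longrightarrow> outdeg (F \<inter> C \<times> C) v = 1"
      unfolding converging_tree_def Let_def by blast
    have "isroot F r" using r0 outdeg_comp[OF C rC] outdeg0_iff[of F r] by simp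
    moreover have "\<forall>v\<in>C. v \<noteq> r \<longrightarrow> outdeg F v = 1"
    proof (intro ballI impI)
      fix v assume "v \<in> C" "v \<noteq> r"
      then show "outdeg F v = 1" using o1 outdeg_comp[OF C \<open>v \<in> C\<close>] by simp
    qed
    ultimately show ?thesis using rC by blast
  qed
  have d: "detr F" unfolding detr_outdeg
  proof
    fix v :: 'n
    have vC: "v \<in> weakly_conn F `` {v}" using wc_refl[of v F] by simp
    obtain r where "r \<in> weakly_conn F `` {v}" "isroot F r"
      and o: "\<forall>u\<in>weakly_conn F `` {v}. u \<noteq> r \<longrightarrow> outdeg F u = 1"
      using rootC[OF refl, of v] by blast
    show "outdeg F v \<le> 1"
    proof (cases "v = r")
      case True then show ?thesis using \<open>isroot F r\<close> outdeg0_iff[of F v] by simp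
    next
      case False then show ?thesis using o vC by simp
    qed
  qed
  have ac: "acyclic F" unfolding acyclic_def
  proof (intro allI notI)
    fix x assume c: "(x,x) \<in> F\<^sup>+"
    obtain r where "r \<in> weakly_conn F `` {x}" and r: "isroot F r"
      using rootC[OF refl, of x] by blast
    then have "(x,r) \<in> weakly_conn F" by simp
    from wc_root_reach[OF d r this] have "(x,r) \<in> F\<^sup>*" .
    from cyc_prop[OF d c this] have "(r,r) \<in> F\<^sup>+" .
    from tranclD[OF this] obtain z where "(r,z) \<in> F" by blast
    then show False using r unfolding isroot_def by blast
  qed
  show ?thesis unfolding ff_def using sub d ac by blast
qed

lemma in_forest_iff: "in_forest W (F::('n::finite \<times> 'n) set) \<longleftrightarrow> ff W F"
  using ff_in_forest in_forest_ff by blast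


lemma card_arcs_nonroots:
  fixes F :: "('n::finite \<times> 'n) set"
  assumes d: "detr F"
  shows "card F = card {v. \<not> isroot F v}"
proof -
  have "inj_on fst F" using d unfolding inj_on_def detr_def by auto
  moreover have "fst ` F = {v. \<not> isroot F v}" unfolding isroot_def by force
  ultimately show ?thesis using card_image[of fst F] by simp
qed

lemma num_trees_roots:
  fixes F :: "('n::finite \<times> 'n) set"
  assumes d: "detr F" and ac: "acyclic F"
  shows "num_trees F = card {r. isroot F r}"
proof -
  have "bij_betw (\<lambda>r. weakly_conn F `` {r}) {r. isroot F r} (UNIV // weakly_conn F)"
  proof (rule bij_betwI')
    fix r s assume r: "r \<in> {r. isroot F r}" and s: "s \<in> {r. isroot F r}"
    show "(weakly_conn F `` {r} = weakly_conn F `` {s}) = (r = s)"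
    proof
      assume "weakly_conn F `` {r} = weakly_conn F `` {s}"
      then have "(r,s) \<in> weakly_conn F" using eq_equiv_class_iff[OF wc_equiv[of F], of r s] by simp
      then show "r = s" using root_unique[OF d, of r s] r s by simp
    qed simp
  next
    fix r assume "r \<in> {r. isroot F r}"
    show "weakly_conn F `` {r} \<in> UNIV // weakly_conn F" by (rule quotientI) simp
  next
    fix C assume "C \<in> UNIV // weakly_conn F"
    then obtain x where C: "C = weakly_conn F `` {x}" unfolding quotient_def by blast
    obtain r where xr: "(x,r) \<in> F\<^sup>*" and r: "isroot F r" using exists_root[OF ac, of x] by blast
    have "weakly_conn F `` {x} = weakly_conn F `` {r}"
      using eq_equiv_class_iff[OF wc_equiv[of F], of x r] reach_wc[OF xr] by simp
    then show "\<exists>r\<in>{r. isroot F r}. C = weakly_conn F `` {r}" using C r by blast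
  qed
  from bij_betw_same_card[OF this] show ?thesis unfolding num_trees_def by simp
qed

lemma card_plus_trees:
  fixes F :: "('n::finite \<times> 'n) set"
  assumes "ff W F"
  shows "card F + num_trees F = CARD('n)"
proof -
  have d: "detr F" and ac: "acyclic F" using assms unfolding ff_def by auto
  have u: "{v. \<not> isroot F v} \<union> {r. isroot F r} = UNIV" by blast
  have "card {v. \<not> isroot F v} + card {r. isroot F r} = card ({v. \<not> isroot F v} \<union> {r. isroot F r})"
    by (rule card_Un_disjoint[symmetric]) auto
  then have "card {v. \<not> isroot F v} + card {r. isroot F r} = CARD('n)" unfolding u .
  then show ?thesis using card_arcs_nonroots[OF d] num_trees_roots[OF d ac] by simp
qed

lemma ff_empty: "ff W {}"
  unfolding ff_def detr_def acyclic_def by simp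

lemma forest_dim_props:
  fixes W :: "real^'n::finite^'n"
  shows "\<exists>F0. ff W F0 \<and> num_trees F0 = forest_dim W"
    and "ff W F \<Longrightarrow> forest_dim W \<le> num_trees F"
proof -
  have fin: "finite (num_trees ` {F. in_forest W F})" by simp
  have ne: "num_trees ` {F. in_forest W F} \<noteq> {}" using ff_empty[of W] in_forest_iff[of W "{}"] by blast
  have "forest_dim W \<in> num_trees ` {F. in_forest W F}"
    unfolding forest_dim_def using Min_in[OF fin ne] .
  then obtain F0 where "in_forest W F0" "num_trees F0 = forest_dim W" by auto
  then show "\<exists>F0. ff W F0 \<and> num_trees F0 = forest_dim W" using in_forest_iff[of W F0] by blast
  assume "ff W F"
  then have "num_trees F \<in> num_trees ` {F. in_forest W F}" using in_forest_iff[of W F] by blast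
  then show "forest_dim W \<le> num_trees F"
    unfolding forest_dim_def using Min_le[OF fin] by blast
qed

lemma ff_card_le:
  fixes W :: "real^'n::finite^'n"
  shows "ff W F \<Longrightarrow> card F \<le> CARD('n) - forest_dim W"
  using card_plus_trees[of W F] forest_dim_props(2)[of W F] by linarith

lemma ff_card_max:
  fixes W :: "real^'n::finite^'n"
  shows "\<exists>F0. ff W F0 \<and> card F0 = CARD('n) - forest_dim W"
proof -
  obtain F0 where "ff W F0" "num_trees F0 = forest_dim W" using forest_dim_props(1)[of W] by blast
  moreover then have "card F0 + num_trees F0 = CARD('n)" using card_plus_trees by blast
  ultimately show ?thesis by (metis add_diff_cancel_right')
qed


lemma wc_step: "(x,y) \<in> F \<Longrightarrow> (x,y) \<in> weakly_conn F"
  unfolding weakly_conn_def by blast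

lemma wc_mono: "F \<subseteq> G \<Longrightarrow> (x,y) \<in> weakly_conn F \<Longrightarrow> (x,y) \<in> weakly_conn G"
proof -
  assume "F \<subseteq> G" "(x,y) \<in> weakly_conn F"
  moreover have "F \<union> F\<inverse> \<subseteq> G \<union> G\<inverse>" using \<open>F \<subseteq> G\<close> by blast
  ultimately show ?thesis unfolding weakly_conn_def using rtrancl_mono[of "F \<union> F\<inverse>" "G \<union> G\<inverse>"] by blast
qed

lemma wc_insert:
  "(x,y) \<in> weakly_conn (insert (a,b) F) \<longleftrightarrow>
    (x,y) \<in> weakly_conn F \<or> ((x,a) \<in> weakly_conn F \<and> (b,y) \<in> weakly_conn F)
     \<or> ((x,b) \<in> weakly_conn F \<and> (a,y) \<in> weakly_conn F)"
  (is "?L \<longleftrightarrow> ?R x y")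
proof
  assume ?L
  then have "(x,y) \<in> (insert (a,b) F \<union> (insert (a,b) F)\<inverse>)\<^sup>*" unfolding weakly_conn_def .
  then show "?R x y"
  proof (induction rule: rtrancl_induct)
    case base then show ?case using wc_refl[of x F] by blast
  next
    case (step y z)
    let ?w = "weakly_conn F"
    have s: "\<And>u v. (u,v) \<in> ?w \<Longrightarrow> (v,u) \<in> ?w" by (rule wc_sym)
    have t: "\<And>u v w. (u,v) \<in> ?w \<Longrightarrow> (v,w) \<in> ?w \<Longrightarrow> (u,w) \<in> ?w" by (rule wc_trans)
    have r: "\<And>u. (u,u) \<in> ?w" by (rule wc_refl)
    have "(y,z) \<in> ?w \<or> (y,z) = (a,b) \<or> (y,z) = (b,a)"
      using step.hyps(2) wc_step[of y z F] wc_step[of z y F] s by blast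
    then consider "(y,z) \<in> ?w" | "y = a" "z = b" | "y = b" "z = a" by blast
    then show ?case
    proof cases
      case 1 then show ?thesis using step.IH t by blast
    next
      case 2 then show ?thesis using step.IH t s r by blast
    next
      case 3 then show ?thesis using step.IH t s r by blast
    qed
  qed
next
  assume R: "?R x y"
  have m: "\<And>u v. (u,v) \<in> weakly_conn F \<Longrightarrow> (u,v) \<in> weakly_conn (insert (a,b) F)"
    using wc_mono[of F "insert (a,b) F"] by blast
  have ab: "(a,b) \<in> weakly_conn (insert (a,b) F)" by (rule wc_step) simp
  have ba: "(b,a) \<in> weakly_conn (insert (a,b) F)" using wc_sym[OF ab] .
  from R show ?L
  proof (elim disjE conjE)
    assume "(x,y) \<in> weakly_conn F" then show ?L using m by blast
  next
    assume "(x,a) \<in> weakly_conn F" "(b,y) \<in> weakly_conn F"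
    then show ?L using m[of x a] m[of b y] ab wc_trans[of x a "insert (a,b) F" b] wc_trans[of x b "insert (a,b) F" y] by blast
  next
    assume "(x,b) \<in> weakly_conn F" "(a,y) \<in> weakly_conn F"
    then show ?L using m[of x b] m[of a y] ba wc_trans[of x b "insert (a,b) F" a] wc_trans[of x a "insert (a,b) F" y] by blast
  qed
qed

lemma ff_subset: "ff W F \<Longrightarrow> G \<subseteq> F \<Longrightarrow> ff W G"
proof -
  assume f: "ff W F" and s: "G \<subseteq> F"
  have 1: "F \<subseteq> arcs W" "detr F" "acyclic F" using f unfolding ff_def by auto
  have "G \<subseteq> arcs W" using 1(1) s by (rule subset_trans[rotated])
  moreover have "detr G" using 1(2) s unfolding detr_def by blast
  moreover have "acyclic G" using acyclic_subset[OF 1(3) s] .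
  ultimately show ?thesis unfolding ff_def by blast
qed

lemma isroot_T:
  fixes F :: "('n::finite \<times> 'n) set"
  assumes d: "detr F" and r: "isroot F i"
  shows "in_tree_rooted_at F i j \<longleftrightarrow> i = j"
proof
  assume "in_tree_rooted_at F i j"
  then have "(i,j) \<in> weakly_conn F" "isroot F j" unfolding in_tree_rooted_at_def outdeg0_iff by auto
  then show "i = j" using root_unique[OF d r] by blast
next
  assume "i = j"
  then show "in_tree_rooted_at F i j" unfolding in_tree_rooted_at_def outdeg0_iff using r wc_refl[of i F] by blast
qed

lemma outdeg_insert_other:
  "j \<noteq> a \<Longrightarrow> outdeg (insert (a,b) F) j = outdeg F j"
  unfolding outdeg_def by simp

lemma outdeg_remove_other:
  "j \<noteq> a \<Longrightarrow> outdeg (F - {(a,b)}) j = outdeg F j"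
  unfolding outdeg_def by simp

lemma weight_insert:
  "(a,b) \<notin> F \<Longrightarrow> weight W (insert (a,b) F) = W$a$b * weight W F"
  unfolding weight_def by simp

lemma ff_insert_root:
  fixes F :: "('n::finite \<times> 'n) set"
  assumes f: "ff W F" and r: "isroot F i" and arc: "(i,m) \<in> arcs W"
    and nc: "(i,m) \<notin> weakly_conn F"
  shows "ff W (insert (i,m) F)"
proof -
  have "(m,i) \<notin> F\<^sup>*" using nc reach_wc[of m i F] wc_sym[of m i F] by blast
  moreover have "acyclic F" using f unfolding ff_def by blast
  ultimately have "acyclic (insert (i,m) F)" by (simp add: acyclic_insert)
  moreover have "detr (insert (i,m) F)" using f r unfolding ff_def detr_def isroot_def by blast
  ultimately show ?thesis using f arc unfolding ff_def by blast
qed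

lemma remove_disconnects:
  fixes F :: "('n::finite \<times> 'n) set"
  assumes f: "ff W F" and ip: "(i,p) \<in> F"
  shows "(i,p) \<notin> weakly_conn (F - {(i,p)})"
proof
  assume c: "(i,p) \<in> weakly_conn (F - {(i,p)})"
  have "ff W (F - {(i,p)})" using ff_subset[OF f, of "F - {(i,p)}"] by blast
  then have d: "detr (F - {(i,p)})" unfolding ff_def by blast
  have r: "isroot (F - {(i,p)}) i" using f ip unfolding ff_def detr_def isroot_def by blast
  have "(p,i) \<in> (F - {(i,p)})\<^sup>*" using wc_root_reach[OF d r wc_sym[OF c]] .
  then have "(p,i) \<in> F\<^sup>*" using rtrancl_mono[of "F - {(i,p)}" F] by blast
  then have "(i,i) \<in> F\<^sup>+" by (rule rtrancl_into_trancl2[OF ip])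
  then show False using f unfolding ff_def acyclic_def by blast
qed


definition succ :: "('n \<times> 'n) set \<Rightarrow> 'n \<Rightarrow> 'n" where
  "succ G i = (THE p. (i,p) \<in> G)"

lemma succ_eq: "detr G \<Longrightarrow> (i,p) \<in> G \<Longrightarrow> succ G i = p"
proof -
  assume d: "detr G" and ip: "(i,p) \<in> G"
  show ?thesis unfolding succ_def
  proof (rule the_equality)
    show "(i,p) \<in> G" by (rule ip)
    fix x assume "(i,x) \<in> G"
    then show "x = p" using det_step[OF d _ ip] by blast
  qed
qed

lemma ff_detr: "ff W F \<Longrightarrow> detr F" unfolding ff_def by blast
lemma ff_arcs: "ff W F \<Longrightarrow> F \<subseteq> arcs W" unfolding ff_def by blast

lemma root_insert_notin: "isroot F i \<Longrightarrow> (i,m) \<notin> F" unfolding isroot_def by blast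

lemma remove_root:
  assumes "detr F" "(i,p) \<in> F" shows "isroot (F - {(i,p)}) i"
  using assms unfolding detr_def isroot_def by blast

lemma card_insert_root:
  fixes F :: "('n::finite \<times> 'n) set"
  assumes "isroot F i" shows "card (insert (i,m) F) = Suc (card F)"
  using root_insert_notin[OF assms, of m] by (simp add: card_insert_disjoint)

lemma card_remove:
  fixes F :: "('n::finite \<times> 'n) set"
  assumes "(i,p) \<in> F" shows "card (F - {(i,p)}) = card F - 1" "card F \<ge> 1"
proof -
  show "card (F - {(i,p)}) = card F - 1" using assms by (simp add: card_Diff_singleton)
  have "F \<noteq> {}" using assms by blast
  then have "0 < card F" using card_gt_0_iff[of F] by simp
  then show "card F \<ge> 1" by simp
qed

lemma T_insert:
  fixes H :: "('n::finite \<times> 'n) set"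
  assumes d: "detr H" and ri: "isroot H i" and nc: "(i,m) \<notin> weakly_conn H" and ji: "j \<noteq> i"
  shows "in_tree_rooted_at (insert (i,m) H) i j \<longleftrightarrow> in_tree_rooted_at H m j"
proof -
  have od: "outdeg (insert (i,m) H) j = outdeg H j" using outdeg_insert_other[OF ji] .
  show ?thesis
  proof (cases "isroot H j")
    case False
    then show ?thesis unfolding in_tree_rooted_at_def od using outdeg0_iff[of H j] by simp
  next
    case True
    have nij: "(i,j) \<notin> weakly_conn H" using root_unique[OF d ri True] ji by blast
    have "(i,j) \<in> weakly_conn (insert (i,m) H) \<longleftrightarrow> (m,j) \<in> weakly_conn H"
      using wc_insert[of i j i m H] nij nc wc_refl[of i H] by simp
    then show ?thesis unfolding in_tree_rooted_at_def od by simp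
  qed
qed

lemma T_nonroot_false:
  fixes G :: "('n::finite \<times> 'n) set"
  shows "(i,m) \<in> G \<Longrightarrow> \<not> in_tree_rooted_at G x i"
proof
  assume "(i,m) \<in> G" "in_tree_rooted_at G x i"
  then have "isroot G i" unfolding in_tree_rooted_at_def using outdeg0_iff[of G i] by simp
  then show False using \<open>(i,m) \<in> G\<close> unfolding isroot_def by blast
qed


definition Fs :: "real^'n::finite^'n \<Rightarrow> nat \<Rightarrow> ('n \<times> 'n) set set" where
  "Fs W k = {F. ff W F \<and> card F = k}"

definition PP :: "real^'n::finite^'n \<Rightarrow> 'n \<Rightarrow> nat \<Rightarrow> (('n \<times> 'n) set \<times> 'n) set" where
  "PP W i k = Fs W k \<times> {m. (i,m) \<in> arcs W}"

lemma PB_reindex: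
  fixes W :: "real^'n::finite^'n"
  shows "(\<Sum>(F,m)\<in>{x \<in> PP W i k. (i, snd x) \<notin> weakly_conn (fst x) \<and> isroot (fst x) i}.
            W$i$m * weight W F * u (insert (i,m) F))
       = (\<Sum>G\<in>{G \<in> Fs W (Suc k). \<not> isroot G i}. weight W G * u G)"
proof (rule sum.reindex_bij_witness[where i = "\<lambda>G. (G - {(i, succ G i)}, succ G i)"
      and j = "\<lambda>(F,m). insert (i,m) F"])
  fix a assume a: "a \<in> {x \<in> PP W i k. (i, snd x) \<notin> weakly_conn (fst x) \<and> isroot (fst x) i}"
  obtain F m where am: "a = (F,m)" by fastforce
  have f: "ff W F" and c: "card F = k" and arc: "(i,m) \<in> arcs W" and nc: "(i,m) \<notin> weakly_conn F"
    and r: "isroot F i" using a unfolding am PP_def Fs_def by auto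
  have g: "ff W (insert (i,m) F)" by (rule ff_insert_root[OF f r arc nc])
  have s: "succ (insert (i,m) F) i = m" using succ_eq[OF ff_detr[OF g], of i m] by simp
  have nin: "(i,m) \<notin> F" using root_insert_notin[OF r] .
  show "(\<lambda>G. (G - {(i, succ G i)}, succ G i)) ((\<lambda>(F,m). insert (i,m) F) a) = a"
    unfolding am using s nin by simp
  show "(\<lambda>(F,m). insert (i,m) F) a \<in> {G \<in> Fs W (Suc k). \<not> isroot G i}"
    unfolding am Fs_def using g card_insert_root[OF r, of m] c unfolding isroot_def by fastforce
  show "weight W ((\<lambda>(F,m). insert (i,m) F) a) * u ((\<lambda>(F,m). insert (i,m) F) a) = (\<lambda>(F,m). W$i$m * weight W F * u (insert (i,m) F)) a"
    unfolding am using weight_insert[OF nin, of W] by simp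
next
  fix G assume G: "G \<in> {G \<in> Fs W (Suc k). \<not> isroot G i}"
  have g: "ff W G" and c: "card G = Suc k" and nr: "\<not> isroot G i" using G unfolding Fs_def by auto
  obtain p where ip: "(i,p) \<in> G" using nr unfolding isroot_def by blast
  have s: "succ G i = p" using succ_eq[OF ff_detr[OF g] ip] .
  show "(\<lambda>(F,m). insert (i,m) F) ((\<lambda>G. (G - {(i, succ G i)}, succ G i)) G) = G"
    unfolding s using ip by auto
  have f: "ff W (G - {(i,p)})" using ff_subset[OF g, of "G - {(i,p)}"] by blast
  have cF: "card (G - {(i,p)}) = k" using card_remove(1)[OF ip] c by simp
  have arc: "(i,p) \<in> arcs W" using ff_arcs[OF g] ip by blast
  have nc: "(i,p) \<notin> weakly_conn (G - {(i,p)})" using remove_disconnects[OF g ip] .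
  have r: "isroot (G - {(i,p)}) i" using remove_root[OF ff_detr[OF g] ip] .
  show "(\<lambda>G. (G - {(i, succ G i)}, succ G i)) G
          \<in> {x \<in> PP W i k. (i, snd x) \<notin> weakly_conn (fst x) \<and> isroot (fst x) i}"
    unfolding s PP_def Fs_def using f cF arc nc r by simp
qed


lemma PC_facts:
  fixes W :: "real^'n::finite^'n"
  assumes f: "ff W F" and arc: "(i,m) \<in> arcs W" and nc: "(i,m) \<notin> weakly_conn F"
    and ip: "(i,p) \<in> F"
  defines "H \<equiv> F - {(i,p)}"
  shows "ff W (insert (i,m) H)" "card (insert (i,m) H) = card F" "(i,p) \<in> arcs W"
    "(i,p) \<notin> weakly_conn (insert (i,m) H)" "\<not> isroot (insert (i,m) H) i"
    "succ (insert (i,m) H) i = m" "insert (i,m) H - {(i,m)} = H" "insert (i,p) H = F"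
    "W$i$p * weight W (insert (i,m) H) = W$i$m * weight W F"
    "in_tree_rooted_at F i j \<longleftrightarrow> in_tree_rooted_at (insert (i,m) H) p j"
proof -
  have hf: "ff W H" unfolding H_def using ff_subset[OF f, of "F - {(i,p)}"] by blast
  have dH: "detr H" using ff_detr[OF hf] .
  have rH: "isroot H i" unfolding H_def using remove_root[OF ff_detr[OF f] ip] .
  have ncH: "(i,m) \<notin> weakly_conn H" using nc wc_mono[of H F i m] unfolding H_def by blast
  have ff': "ff W (insert (i,m) H)" by (rule ff_insert_root[OF hf rH arc ncH])
  then show "ff W (insert (i,m) H)" .
  have nin: "(i,m) \<notin> H" using root_insert_notin[OF rH] .
  have ninp: "(i,p) \<notin> H" unfolding H_def by blast
  have FH: "F = insert (i,p) H" unfolding H_def using ip by blast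
  show "insert (i,p) H = F" using FH by simp
  show "card (insert (i,m) H) = card F"
    unfolding FH using nin ninp by (simp add: card_insert_disjoint)
  show "(i,p) \<in> arcs W" using ff_arcs[OF f] ip by blast
  have ipH: "(i,p) \<notin> weakly_conn H" unfolding H_def using remove_disconnects[OF f ip] .
  have piH: "(p,i) \<notin> weakly_conn H" using ipH wc_sym[of p i H] by blast
  have mp: "(m,p) \<notin> weakly_conn H"
  proof
    assume "(m,p) \<in> weakly_conn H"
    then have "(m,p) \<in> weakly_conn F" using wc_mono[of H F m p] unfolding H_def by blast
    moreover have "(i,p) \<in> weakly_conn F" using wc_step[OF ip] .
    ultimately have "(i,m) \<in> weakly_conn F" using wc_trans[of i p F m] wc_sym[of m p F] by blast
    then show False using nc by blast
  qed
  show "(i,p) \<notin> weakly_conn (insert (i,m) H)"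
    using wc_insert[of i p i m H] ipH mp ncH by blast
  show "\<not> isroot (insert (i,m) H) i" unfolding isroot_def by blast
  show "succ (insert (i,m) H) i = m" using succ_eq[OF ff_detr[OF ff'], of i m] by simp
  show "insert (i,m) H - {(i,m)} = H" using nin by blast
  have wF: "weight W F = W$i$p * weight W H" unfolding FH using weight_insert[OF ninp] .
  have wF': "weight W (insert (i,m) H) = W$i$m * weight W H" using weight_insert[OF nin] .
  show "W$i$p * weight W (insert (i,m) H) = W$i$m * weight W F" unfolding wF wF' by simp
  show "in_tree_rooted_at F i j \<longleftrightarrow> in_tree_rooted_at (insert (i,m) H) p j"
  proof (cases "j = i")
    case True
    have "\<not> in_tree_rooted_at F i j" unfolding True using T_nonroot_false[OF ip] .
    moreover have "\<not> in_tree_rooted_at (insert (i,m) H) p j" unfolding True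
      using T_nonroot_false[of i m "insert (i,m) H"] by blast
    ultimately show ?thesis by blast
  next
    case False
    have o1: "outdeg F j = outdeg H j" unfolding FH using outdeg_insert_other[OF False] .
    have o2: "outdeg (insert (i,m) H) j = outdeg H j" using outdeg_insert_other[OF False] .
    show ?thesis
    proof (cases "isroot H j")
      case nr: False
      then show ?thesis unfolding in_tree_rooted_at_def o1 o2 using outdeg0_iff[of H j] by simp
    next
      case rj: True
      have nij: "(i,j) \<notin> weakly_conn H" using root_unique[OF dH rH rj] False by blast
      have e1: "(i,j) \<in> weakly_conn F \<longleftrightarrow> (p,j) \<in> weakly_conn H"
        unfolding FH using wc_insert[of i j i p H] nij ipH wc_refl[of i H] by simp
      have e2: "(p,j) \<in> weakly_conn (insert (i,m) H) \<longleftrightarrow> (p,j) \<in> weakly_conn H"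
        using wc_insert[of p j i m H] nij piH by simp
      show ?thesis unfolding in_tree_rooted_at_def o1 o2 e1 e2 ..
    qed
  qed
qed


lemma PC_swap:
  fixes W :: "real^'n::finite^'n"
  shows "(\<Sum>(F,m)\<in>{x \<in> PP W i k. (i, snd x) \<notin> weakly_conn (fst x) \<and> \<not> isroot (fst x) i}.
            W$i$m * weight W F * (if in_tree_rooted_at F i j then 1 else 0))
       = (\<Sum>(F,m)\<in>{x \<in> PP W i k. (i, snd x) \<notin> weakly_conn (fst x) \<and> \<not> isroot (fst x) i}.
            W$i$m * weight W F * (if in_tree_rooted_at F m j then 1 else 0))"
    (is "sum ?g ?S = sum ?h ?S")
proof (rule sum.reindex_bij_witness[where i = "\<lambda>(F,m). (insert (i,m) (F - {(i, succ F i)}), succ F i)"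
      and j = "\<lambda>(F,m). (insert (i,m) (F - {(i, succ F i)}), succ F i)"])
  fix a assume a: "a \<in> ?S"
  obtain F m where am: "a = (F,m)" by fastforce
  have f: "ff W F" and c: "card F = k" and arc: "(i,m) \<in> arcs W" and nc: "(i,m) \<notin> weakly_conn F"
    and nr: "\<not> isroot F i" using a unfolding am PP_def Fs_def by auto
  obtain p where ip: "(i,p) \<in> F" using nr unfolding isroot_def by blast
  have s: "succ F i = p" using succ_eq[OF ff_detr[OF f] ip] .
  note X = PC_facts[OF f arc nc ip]
  have X10: "in_tree_rooted_at F i j \<longleftrightarrow> in_tree_rooted_at (insert (i,m) (F - {(i,p)})) p j"
    using PC_facts(10)[OF f arc nc ip] .
  let ?H = "F - {(i,p)}"
  have s2: "succ (insert (i,m) ?H) i = m" using X(6) .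
  have e1: "(\<lambda>(F,m). (insert (i,m) (F - {(i, succ F i)}), succ F i)) (F,m) = (insert (i,m) ?H, p)"
    using s by simp
  have e2: "(\<lambda>(F,m). (insert (i,m) (F - {(i, succ F i)}), succ F i)) (insert (i,m) ?H, p) = (F, m)"
    using s2 X(7) X(8) by simp
  show "(\<lambda>(F,m). (insert (i,m) (F - {(i, succ F i)}), succ F i))
          ((\<lambda>(F,m). (insert (i,m) (F - {(i, succ F i)}), succ F i)) a) = a"
    unfolding am by (simp only: e1 e2)
  then show "(\<lambda>(F,m). (insert (i,m) (F - {(i, succ F i)}), succ F i))
          ((\<lambda>(F,m). (insert (i,m) (F - {(i, succ F i)}), succ F i)) a) = a" .
  show "(\<lambda>(F,m). (insert (i,m) (F - {(i, succ F i)}), succ F i)) a \<in> ?S"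
    unfolding am e1 PP_def Fs_def using X(1-5) c by simp
  then show "(\<lambda>(F,m). (insert (i,m) (F - {(i, succ F i)}), succ F i)) a \<in> ?S" .
  show "?h ((\<lambda>(F,m). (insert (i,m) (F - {(i, succ F i)}), succ F i)) a) = ?g a"
    unfolding am e1 using X(9) X10 by simp
qed


definition ind :: "bool \<Rightarrow> real" where "ind b = (if b then 1 else 0)"

lemma Q_entry:
  fixes W :: "real^'n::finite^'n"
  shows "Qmat W k $ x $ j = (\<Sum>F\<in>Fs W k. weight W F * ind (in_tree_rooted_at F x j))"
proof -
  have "{F. in_forest W F \<and> card F = k \<and> in_tree_rooted_at F x j} = {F \<in> Fs W k. in_tree_rooted_at F x j}"
    unfolding Fs_def using in_forest_iff[of W] by blast
  moreover have "(\<Sum>F\<in>Fs W k. weight W F * ind (in_tree_rooted_at F x j))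
      = (\<Sum>F\<in>Fs W k. if in_tree_rooted_at F x j then weight W F else 0)"
    unfolding ind_def by (rule sum.cong) auto
  ultimately show ?thesis unfolding Qmat_def using sum.inter_filter[of "Fs W k" "weight W" "\<lambda>F. in_tree_rooted_at F x j"]
    by simp
qed

lemma sigma_entry:
  fixes W :: "real^'n::finite^'n"
  shows "sigma W k = (\<Sum>F\<in>Fs W k. weight W F)"
proof -
  have "{F. in_forest W F \<and> card F = k} = Fs W k"
    unfolding Fs_def using in_forest_iff[of W] by blast
  then show ?thesis unfolding sigma_def by simp
qed

lemma sum_PP:
  fixes W :: "real^'n::finite^'n"
  assumes Wii: "W$i$i = 0" and Wnn: "\<forall>m. W$i$m \<ge> 0"
  shows "(\<Sum>m\<in>UNIV-{i}. W$i$m * (\<Sum>F\<in>Fs W k. g F m)) = (\<Sum>(F,m)\<in>PP W i k. W$i$m * g F m)"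
proof -
  let ?M = "{m. (i,m) \<in> arcs W}"
  have sub: "?M \<subseteq> UNIV - {i}" using Wii unfolding arcs_def by auto
  have "(\<Sum>m\<in>UNIV-{i}. W$i$m * (\<Sum>F\<in>Fs W k. g F m)) = (\<Sum>m\<in>?M. W$i$m * (\<Sum>F\<in>Fs W k. g F m))"
  proof (rule sum.mono_neutral_right)
    show "finite (UNIV - {i})" by simp
    show "?M \<subseteq> UNIV - {i}" by (rule sub)
    show "\<forall>m\<in>UNIV - {i} - ?M. W$i$m * (\<Sum>F\<in>Fs W k. g F m) = 0"
    proof
      fix m assume "m \<in> UNIV - {i} - ?M"
      then have "\<not> W$i$m > 0" unfolding arcs_def by auto
      then have "W$i$m = 0" using Wnn[rule_format, of m] by linarith
      then show "W$i$m * (\<Sum>F\<in>Fs W k. g F m) = 0" by simp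
    qed
  qed
  also have "\<dots> = (\<Sum>m\<in>?M. \<Sum>F\<in>Fs W k. W$i$m * g F m)" by (simp add: sum_distrib_left)
  also have "\<dots> = (\<Sum>F\<in>Fs W k. \<Sum>m\<in>?M. W$i$m * g F m)" by (rule sum.swap)
  also have "\<dots> = (\<Sum>(F,m)\<in>Fs W k \<times> ?M. W$i$m * g F m)" by (rule sum.cartesian_product)
  finally show ?thesis unfolding PP_def .
qed


lemma T_same_comp:
  "(i,m) \<in> weakly_conn F \<Longrightarrow> in_tree_rooted_at F i j \<longleftrightarrow> in_tree_rooted_at F m j"
  unfolding in_tree_rooted_at_def
  using wc_trans[of i m F j] wc_trans[of m i F j] wc_sym[of i m F] by blast

lemma split3:
  assumes "finite P"
  shows "sum f P = sum f {x\<in>P. Q x} + sum f {x\<in>P. \<not> Q x \<and> R x} + sum f {x\<in>P. \<not> Q x \<and> \<not> R x}"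
proof -
  have a: "sum f P = sum f (P \<inter> {x. Q x}) + sum f (P - {x. Q x})" by (rule sum.Int_Diff[OF assms])
  have fin: "finite (P - {x. Q x})" using assms by simp
  have b: "sum f (P - {x. Q x}) = sum f ((P - {x. Q x}) \<inter> {x. R x}) + sum f ((P - {x. Q x}) - {x. R x})"
    by (rule sum.Int_Diff[OF fin])
  have e1: "P \<inter> {x. Q x} = {x\<in>P. Q x}" by blast
  have e2: "(P - {x. Q x}) \<inter> {x. R x} = {x\<in>P. \<not> Q x \<and> R x}" by blast
  have e3: "(P - {x. Q x}) - {x. R x} = {x\<in>P. \<not> Q x \<and> \<not> R x}" by blast
  show ?thesis using a b unfolding e1 e2 e3 by (simp add: add.assoc)
qed


lemma main_identity:
  fixes W :: "real^'n::finite^'n"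
  assumes Wii: "W$i$i = 0" and Wnn: "\<forall>m. W$i$m \<ge> 0"
  shows "Qmat W (Suc k) $ i $ j + (\<Sum>m\<in>UNIV-{i}. W$i$m * Qmat W k $ i $ j)
       = (if i = j then sigma W (Suc k) else 0) + (\<Sum>m\<in>UNIV-{i}. W$i$m * Qmat W k $ m $ j)"
proof -
  define P where "P = PP W i k"
  define A where "A = {x\<in>P. (i, snd x) \<in> weakly_conn (fst x)}"
  define B where "B = {x\<in>P. \<not> (i, snd x) \<in> weakly_conn (fst x) \<and> isroot (fst x) i}"
  define C where "C = {x\<in>P. \<not> (i, snd x) \<in> weakly_conn (fst x) \<and> \<not> isroot (fst x) i}"
  define GR where "GR = {G\<in>Fs W (Suc k). isroot G i}"
  define GB where "GB = {G\<in>Fs W (Suc k). \<not> isroot G i}"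
  define f1 where "f1 = (\<lambda>(F,m). W$i$m * weight W F * (if in_tree_rooted_at F i j then 1 else (0::real)))"
  define f2 where "f2 = (\<lambda>(F,m). W$i$m * weight W F * (if in_tree_rooted_at F m j then 1 else (0::real)))"
  have finP: "finite P" by simp
  have s1: "(\<Sum>m\<in>UNIV-{i}. W$i$m * Qmat W k $ i $ j) = sum f1 P"
    unfolding Q_entry P_def f1_def
    using sum_PP[OF Wii Wnn, where g = "\<lambda>F m. weight W F * ind (in_tree_rooted_at F i j)" and k = k]
    by (simp add: ind_def mult.assoc)
  have s2: "(\<Sum>m\<in>UNIV-{i}. W$i$m * Qmat W k $ m $ j) = sum f2 P"
    unfolding Q_entry P_def f2_def
    using sum_PP[OF Wii Wnn, where g = "\<lambda>F m. weight W F * ind (in_tree_rooted_at F m j)" and k = k]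
    by (simp add: ind_def mult.assoc)
  have sp1: "sum f1 P = sum f1 A + sum f1 B + sum f1 C"
    unfolding A_def B_def C_def by (rule split3[OF finP])
  have sp2: "sum f2 P = sum f2 A + sum f2 B + sum f2 C"
    unfolding A_def B_def C_def by (rule split3[OF finP])
  have eA: "sum f1 A = sum f2 A"
  proof (rule sum.cong[OF refl])
    fix x assume "x \<in> A"
    then obtain F m where x: "x = (F,m)" and c: "(i,m) \<in> weakly_conn F" unfolding A_def by force
    show "f1 x = f2 x" unfolding x f1_def f2_def using T_same_comp[OF c, of j] by simp
  qed
  have eC: "sum f1 C = sum f2 C"
    unfolding C_def P_def f1_def f2_def using PC_swap[where W=W and i=i and k=k and j=j] by simp
  have eB1: "sum f1 B = (\<Sum>G\<in>GB. weight W G * (if i = j then 1 else 0))"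
  proof -
    have "sum f1 B = (\<Sum>(F,m)\<in>B. W$i$m * weight W F * (\<lambda>G. if i = j then 1 else (0::real)) (insert (i,m) F))"
    proof (rule sum.cong[OF refl])
      fix x assume "x \<in> B"
      then obtain F m where x: "x = (F,m)" and f: "ff W F" and r: "isroot F i"
        unfolding B_def P_def PP_def Fs_def by force
      show "f1 x = (\<lambda>(F,m). W$i$m * weight W F * (\<lambda>G. if i = j then 1 else (0::real)) (insert (i,m) F)) x"
        unfolding x f1_def using isroot_T[OF ff_detr[OF f] r, of j] by simp
    qed
    also have "\<dots> = (\<Sum>G\<in>GB. weight W G * (if i = j then 1 else 0))"
      unfolding B_def P_def GB_def by (rule PB_reindex)
    finally show ?thesis .
  qed
  have eB2: "sum f2 B = (\<Sum>G\<in>GB. weight W G * (if in_tree_rooted_at G i j then 1 else 0))"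
  proof -
    have "sum f2 B = (\<Sum>(F,m)\<in>B. W$i$m * weight W F * (\<lambda>G. if in_tree_rooted_at G i j then 1 else (0::real)) (insert (i,m) F))"
    proof (rule sum.cong[OF refl])
      fix x assume "x \<in> B"
      then obtain F m where x: "x = (F,m)" and f: "ff W F" and r: "isroot F i"
        and nc: "(i,m) \<notin> weakly_conn F"
        unfolding B_def P_def PP_def Fs_def by force
      have "in_tree_rooted_at F m j \<longleftrightarrow> in_tree_rooted_at (insert (i,m) F) i j"
      proof (cases "j = i")
        case True
        have "\<not> in_tree_rooted_at F m i"
          using nc wc_sym[of m i F] unfolding in_tree_rooted_at_def by blast
        moreover have "\<not> in_tree_rooted_at (insert (i,m) F) i i"
          using T_nonroot_false[of i m "insert (i,m) F"] by blast
        ultimately show ?thesis using True by simp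
      next
        case False
        show ?thesis using T_insert[OF ff_detr[OF f] r nc False] by simp
      qed
      then show "f2 x = (\<lambda>(F,m). W$i$m * weight W F * (\<lambda>G. if in_tree_rooted_at G i j then 1 else (0::real)) (insert (i,m) F)) x"
        unfolding x f2_def by simp
    qed
    also have "\<dots> = (\<Sum>G\<in>GB. weight W G * (if in_tree_rooted_at G i j then 1 else 0))"
      unfolding B_def P_def GB_def by (rule PB_reindex)
    finally show ?thesis .
  qed
  have finF: "finite (Fs W (Suc k))" by simp
  have FsU: "Fs W (Suc k) = GR \<union> GB" and disj: "GR \<inter> GB = {}" unfolding GR_def GB_def by auto
  have finGR: "finite GR" and finGB: "finite GB" by simp_all
  have Q1: "Qmat W (Suc k) $ i $ j = (\<Sum>G\<in>GR. weight W G * (if i = j then 1 else 0))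
            + (\<Sum>G\<in>GB. weight W G * (if in_tree_rooted_at G i j then 1 else 0))"
  proof -
    have "Qmat W (Suc k) $ i $ j = (\<Sum>G\<in>GR. weight W G * ind (in_tree_rooted_at G i j))
            + (\<Sum>G\<in>GB. weight W G * ind (in_tree_rooted_at G i j))"
      unfolding Q_entry FsU using sum.union_disjoint[OF finGR finGB disj] by simp
    moreover have "(\<Sum>G\<in>GR. weight W G * ind (in_tree_rooted_at G i j))
        = (\<Sum>G\<in>GR. weight W G * (if i = j then 1 else 0))"
    proof (rule sum.cong[OF refl])
      fix G assume "G \<in> GR"
      then have "ff W G" "isroot G i" unfolding GR_def Fs_def by auto
      then show "weight W G * ind (in_tree_rooted_at G i j) = weight W G * (if i = j then 1 else 0)"
        using isroot_T[OF ff_detr, of W G i j] unfolding ind_def by simp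
    qed
    moreover have "(\<Sum>G\<in>GB. weight W G * ind (in_tree_rooted_at G i j))
        = (\<Sum>G\<in>GB. weight W G * (if in_tree_rooted_at G i j then 1 else 0))"
      unfolding ind_def by simp
    ultimately show ?thesis by simp
  qed
  have S1: "sigma W (Suc k) = (\<Sum>G\<in>GR. weight W G) + (\<Sum>G\<in>GB. weight W G)"
    unfolding sigma_entry FsU using sum.union_disjoint[OF finGR finGB disj] by simp
  have S2: "(if i = j then sigma W (Suc k) else 0) = (\<Sum>G\<in>GR. weight W G * (if i = j then 1 else 0))
            + (\<Sum>G\<in>GB. weight W G * (if i = j then 1 else 0))"
    unfolding S1 by simp
  show ?thesis unfolding s1 s2 sp1 sp2 Q1 S2 eA eB1 eB2 eC by simp
qed


lemma mm_rdistrib: "((A::real^'n::finite^'n) + B) ** C = A ** C + B ** C"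
  by (simp add: matrix_matrix_mult_def vec_eq_iff sum.distrib distrib_right)

lemma mm_scaleR_left: "((c::real) *\<^sub>R (A::real^'n::finite^'n)) ** B = c *\<^sub>R (A ** B)"
  by (simp add: scalar_matrix_assoc)

lemma mm_scaleR_right: "(A::real^'n::finite^'n) ** ((c::real) *\<^sub>R B) = c *\<^sub>R (A ** B)"
  by (simp add: matrix_matrix_mult_def vec_eq_iff sum_distrib_left mult_ac)

lemma mm_sum_right:
  fixes A :: "real^'n::finite^'n"
  shows "finite S \<Longrightarrow> A ** sum f S = (\<Sum>k\<in>S. A ** f k)"
  by (induction S rule: finite_induct) (simp_all add: matrix_add_ldistrib)

lemma mm_diff_right: "(A::real^'n::finite^'n) ** (B - C) = A ** B - A ** C"
  by (simp add: matrix_matrix_mult_def vec_eq_iff sum_subtractf right_diff_distrib)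

lemma Q_step:
  fixes W :: "real^'n::finite^'n"
  assumes Wii: "\<forall>i. W$i$i = 0" and Wnn: "\<forall>i j. W$i$j \<ge> 0"
  shows "laplacian W ** Qmat W k = sigma W (Suc k) *\<^sub>R mat 1 - Qmat W (Suc k)"
proof -
  have "(laplacian W ** Qmat W k) $ i $ j = (sigma W (Suc k) *\<^sub>R mat 1 - Qmat W (Suc k)) $ i $ j" for i j
  proof -
    have Wi: "W$i$i = 0" "\<forall>m. W$i$m \<ge> 0" using Wii Wnn by auto
    have "(laplacian W ** Qmat W k) $ i $ j = (\<Sum>m\<in>UNIV. laplacian W $ i $ m * Qmat W k $ m $ j)"
      by (simp add: matrix_matrix_mult_def)
    also have "\<dots> = laplacian W $ i $ i * Qmat W k $ i $ j + (\<Sum>m\<in>UNIV-{i}. laplacian W $ i $ m * Qmat W k $ m $ j)"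
      by (simp add: sum.remove)
    also have "\<dots> = (\<Sum>m\<in>UNIV-{i}. W$i$m * Qmat W k $ i $ j) - (\<Sum>m\<in>UNIV-{i}. W$i$m * Qmat W k $ m $ j)"
      by (simp add: laplacian_def sum_distrib_right sum_negf)
    also have "\<dots> = (if i = j then sigma W (Suc k) else 0) - Qmat W (Suc k) $ i $ j"
      using main_identity[OF Wi, of k j] by simp
    also have "\<dots> = (sigma W (Suc k) *\<^sub>R mat 1 - Qmat W (Suc k)) $ i $ j"
      by (simp add: mat_def)
    finally show ?thesis .
  qed
  then show ?thesis by (simp add: vec_eq_iff)
qed

lemma Fs0: "Fs W 0 = {{}}"
  unfolding Fs_def using ff_empty[of W] by auto

lemma wc_empty: "weakly_conn {} = Id"
  unfolding weakly_conn_def by simp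

lemma Q0: "Qmat (W::real^'n::finite^'n) 0 = mat 1"
proof -
  have "Qmat W 0 $ i $ j = mat 1 $ i $ j" for i j
    unfolding Q_entry Fs0 by (simp add: in_tree_rooted_at_def wc_empty outdeg_def weight_def ind_def mat_def)
  then show ?thesis by (simp add: vec_eq_iff)
qed

lemma sigma0: "sigma (W::real^'n::finite^'n) 0 = 1"
  unfolding sigma_entry Fs0 by (simp add: weight_def)

lemma Fs_big: "k > CARD('n) - forest_dim W \<Longrightarrow> Fs (W::real^'n::finite^'n) k = {}"
  unfolding Fs_def using ff_card_le[of W] by fastforce

lemma Q_big: "k > CARD('n) - forest_dim W \<Longrightarrow> Qmat (W::real^'n::finite^'n) k = 0"
proof -
  assume a: "k > CARD('n) - forest_dim W"
  have "Qmat W k $ i $ j = 0" for i j unfolding Q_entry using Fs_big[OF a] by simp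
  then show ?thesis by (simp add: vec_eq_iff)
qed

lemma sigma_big: "k > CARD('n) - forest_dim W \<Longrightarrow> sigma (W::real^'n::finite^'n) k = 0"
proof -
  assume a: "k > CARD('n) - forest_dim W"
  show ?thesis unfolding sigma_entry using Fs_big[OF a] by simp
qed


lemma poly_identity:
  fixes W :: "real^'n::finite^'n"
  assumes Wii: "\<forall>i. W$i$i = 0" and Wnn: "\<forall>i j. W$i$j \<ge> 0"
  shows "(mat 1 + \<tau> *\<^sub>R laplacian W) ** Q_poly W \<tau> = sigma_poly W \<tau> *\<^sub>R mat 1"
proof -
  define N where "N = CARD('n) - forest_dim W"
  define X where "X k = sigma W k *\<^sub>R mat 1 - Qmat W k" for k
  have X0: "X 0 = 0" unfolding X_def Q0 sigma0 by simp
  have Qp: "Q_poly W \<tau> = (\<Sum>k\<le>N. \<tau>^k *\<^sub>R Qmat W k)" unfolding Q_poly_def N_def ..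
  have Qp2: "Q_poly W \<tau> = (\<Sum>k\<le>Suc N. \<tau>^k *\<^sub>R Qmat W k)"
    unfolding Qp using Q_big[where W=W and k="Suc N"] unfolding N_def by simp
  have sp: "sigma_poly W \<tau> = (\<Sum>k\<le>Suc N. sigma W k * \<tau>^k)"
    unfolding sigma_poly_def using sigma_big[where W=W and k="Suc N"] unfolding N_def by simp
  have "laplacian W ** Q_poly W \<tau> = (\<Sum>k\<le>N. \<tau>^k *\<^sub>R X (Suc k))"
    unfolding Qp by (simp add: mm_sum_right mm_scaleR_right Q_step[OF Wii Wnn] X_def)
  then have "\<tau> *\<^sub>R (laplacian W ** Q_poly W \<tau>) = (\<Sum>k\<le>N. \<tau>^(Suc k) *\<^sub>R X (Suc k))"
    by (simp add: scaleR_sum_right)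
  also have "\<dots> = (\<Sum>k\<le>Suc N. \<tau>^k *\<^sub>R X k)"
    using sum.atMost_Suc_shift[of "\<lambda>k. \<tau>^k *\<^sub>R X k" N] X0 by simp
  finally have e: "\<tau> *\<^sub>R (laplacian W ** Q_poly W \<tau>) = (\<Sum>k\<le>Suc N. \<tau>^k *\<^sub>R X k)" .
  have "(mat 1 + \<tau> *\<^sub>R laplacian W) ** Q_poly W \<tau> = Q_poly W \<tau> + \<tau> *\<^sub>R (laplacian W ** Q_poly W \<tau>)"
    by (simp add: mm_rdistrib mm_scaleR_left)
  also have "\<dots> = (\<Sum>k\<le>Suc N. \<tau>^k *\<^sub>R Qmat W k + \<tau>^k *\<^sub>R X k)"
    unfolding e by (subst Qp2) (simp add: sum.distrib)
  also have "\<dots> = (\<Sum>k\<le>Suc N. (sigma W k * \<tau>^k) *\<^sub>R mat 1)"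
    unfolding X_def by (simp add: scaleR_diff_right mult.commute)
  also have "\<dots> = sigma_poly W \<tau> *\<^sub>R mat 1"
    unfolding sp by (rule scaleR_sum_left[symmetric])
  finally show ?thesis .
qed

lemma weight_pos: "ff W F \<Longrightarrow> weight W F > 0"
  unfolding weight_def ff_def arcs_def by (rule prod_pos) auto

lemma weight_nonneg: "ff W F \<Longrightarrow> weight W F \<ge> 0"
  using weight_pos[of W F] by simp

lemma sigma_nonneg: "sigma (W::real^'n::finite^'n) k \<ge> 0"
  unfolding sigma_entry Fs_def by (rule sum_nonneg) (simp add: weight_nonneg)

lemma sigma_top_pos: "sigma (W::real^'n::finite^'n) (CARD('n) - forest_dim W) > 0"
proof -
  obtain F0 where F0: "ff W F0" "card F0 = CARD('n) - forest_dim W" using ff_card_max[of W] by blast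
  have "F0 \<in> Fs W (CARD('n) - forest_dim W)" unfolding Fs_def using F0 by simp
  moreover have "\<forall>F\<in>Fs W (CARD('n) - forest_dim W). weight W F \<ge> 0" unfolding Fs_def by (simp add: weight_nonneg)
  ultimately show ?thesis unfolding sigma_entry
    using sum_pos2[of "Fs W (CARD('n) - forest_dim W)" F0 "weight W"] weight_pos[OF F0(1)] by simp
qed

lemma sigma_poly_pos:
  fixes W :: "real^'n::finite^'n"
  assumes "\<tau> > 0" shows "sigma_poly W \<tau> > 0"
proof -
  let ?N = "CARD('n) - forest_dim W"
  have "sigma_poly W \<tau> \<ge> sigma W ?N * \<tau>^?N"
    unfolding sigma_poly_def
    by (rule member_le_sum) (use assms sigma_nonneg[of W] in auto)
  moreover have "sigma W ?N * \<tau>^?N > 0" using sigma_top_pos[of W] assms by simp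
  ultimately show ?thesis by linarith
qed


lemma sum_zero_pow:
  fixes c :: "nat \<Rightarrow> 'a::real_vector"
  shows "(\<Sum>k\<le>N. (0::real)^(N-k) *\<^sub>R c k) = c N"
proof -
  have "(\<Sum>k\<le>N. (0::real)^(N-k) *\<^sub>R c k) = (\<Sum>k\<le>N. if k = N then c k else 0)"
  proof (rule sum.cong[OF refl])
    fix k assume "k \<in> {..N}"
    then have "k \<le> N" by simp
    then show "(0::real)^(N-k) *\<^sub>R c k = (if k = N then c k else 0)" by (simp add: power_0_left)
  qed
  also have "\<dots> = c N" by (simp add: sum.delta)
  finally show ?thesis .
qed

lemma inv_pow_split:
  assumes "(t::real) \<noteq> 0" "k \<le> N"
  shows "(inverse t)^(N-k) = inverse (t^N) * t^k"
  using power_diff_conv_inverse[of "inverse t" k N] assms by (simp add: power_inverse)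

lemma J_limit:
  fixes W :: "real^'n::finite^'n"
  shows "(Jmat W \<longlongrightarrow> Jtilde W) at_top"
proof -
  define N where "N = CARD('n) - forest_dim W"
  define qf where "qf u = (\<Sum>k\<le>N. u^(N-k) *\<^sub>R Qmat W k)" for u :: real
  define sf where "sf u = (\<Sum>k\<le>N. u^(N-k) *\<^sub>R sigma W k)" for u :: real
  have inv0: "((\<lambda>\<tau>::real. inverse \<tau>) \<longlongrightarrow> 0) at_top"
    by (rule tendsto_inverse_0_at_top[OF filterlim_ident])
  have lq: "((\<lambda>\<tau>. qf (inverse \<tau>)) \<longlongrightarrow> qf 0) at_top"
    unfolding qf_def by (intro tendsto_sum tendsto_scaleR tendsto_power tendsto_const inv0)
  have ls: "((\<lambda>\<tau>. sf (inverse \<tau>)) \<longlongrightarrow> sf 0) at_top"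
    unfolding sf_def by (intro tendsto_sum tendsto_scaleR tendsto_power tendsto_const inv0)
  have q0: "qf 0 = Qmat W N" unfolding qf_def by (rule sum_zero_pow)
  have s0: "sf 0 = sigma W N" unfolding sf_def using sum_zero_pow[of N "sigma W"] by simp
  have sN: "sigma W N \<noteq> 0" unfolding N_def using sigma_top_pos[of W] by simp
  have lim: "((\<lambda>\<tau>. inverse (sf (inverse \<tau>)) *\<^sub>R qf (inverse \<tau>)) \<longlongrightarrow> Jtilde W) at_top"
  proof -
    have "((\<lambda>\<tau>. inverse (sf (inverse \<tau>)) *\<^sub>R qf (inverse \<tau>)) \<longlongrightarrow> inverse (sf 0) *\<^sub>R qf 0) at_top"
      by (intro tendsto_scaleR tendsto_inverse lq ls) (simp add: s0 sN)
    moreover have "inverse (sf 0) *\<^sub>R qf 0 = Jtilde W" unfolding q0 s0 Jtilde_def N_def ..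
    ultimately show ?thesis by simp
  qed
  have ev: "eventually (\<lambda>\<tau>. inverse (sf (inverse \<tau>)) *\<^sub>R qf (inverse \<tau>) = Jmat W \<tau>) at_top"
    using eventually_gt_at_top[of "0::real"]
  proof (rule eventually_mono)
    fix \<tau> :: real assume t: "\<tau> > 0"
    then have t0: "\<tau> \<noteq> 0" by simp
    have qe: "qf (inverse \<tau>) = inverse (\<tau>^N) *\<^sub>R Q_poly W \<tau>"
      unfolding qf_def Q_poly_def N_def[symmetric] scaleR_sum_right
      by (rule sum.cong[OF refl]) (simp add: inv_pow_split[OF t0])
    have se: "sf (inverse \<tau>) = inverse (\<tau>^N) * sigma_poly W \<tau>"
      unfolding sf_def sigma_poly_def N_def[symmetric] sum_distrib_left
      by (rule sum.cong[OF refl]) (simp add: inv_pow_split[OF t0])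
    have "\<tau>^N \<noteq> 0" using t0 by simp
    then show "inverse (sf (inverse \<tau>)) *\<^sub>R qf (inverse \<tau>) = Jmat W \<tau>"
      unfolding qe se Jmat_def using t0 by (simp add: inverse_mult_distrib)
  qed
  show ?thesis using tendsto_cong[OF ev] lim by simp
qed

lemma matrix_inv_eq:
  fixes A B :: "real^'n::finite^'n"
  assumes "A ** B = mat 1"
  shows "matrix_inv A = B"
proof -
  have BA: "B ** A = mat 1" using matrix_left_right_inverse[of A B] assms by simp
  have ex: "\<exists>A'. A ** A' = mat 1 \<and> A' ** A = mat 1" using assms BA by blast
  define A' where "A' = matrix_inv A"
  have "A ** A' = mat 1 \<and> A' ** A = mat 1" unfolding A'_def matrix_inv_def using someI_ex[OF ex] .
  then have "A' ** A = mat 1" by simp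
  then have "A' = A' ** (A ** B)" using assms by simp
  also have "\<dots> = (A' ** A) ** B" by (rule matrix_mul_assoc)
  also have "\<dots> = B" using \<open>A' ** A = mat 1\<close> by simp
  finally show ?thesis unfolding A'_def .
qed

theorem proposition11:
  fixes W :: "real^'n^'n"
  assumes "CARD('n) > 1"
    and "\<forall>i. W$i$i = 0"
    and "\<forall>i j. W$i$j \<ge> 0"
  shows "(Jmat W \<longlongrightarrow> Jtilde W) at_top \<and>
         ((\<lambda>\<tau>::real. matrix_inv (mat 1 + \<tau> *\<^sub>R laplacian W)) \<longlongrightarrow> Jtilde W) at_top"
proof
  show J: "(Jmat W \<longlongrightarrow> Jtilde W) at_top" by (rule J_limit)
  have ev: "eventually (\<lambda>\<tau>. Jmat W \<tau> = matrix_inv (mat 1 + \<tau> *\<^sub>R laplacian W)) at_top"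
    using eventually_gt_at_top[of "0::real"]
  proof (rule eventually_mono)
    fix \<tau> :: real assume t: "\<tau> > 0"
    have sp: "sigma_poly W \<tau> \<noteq> 0" using sigma_poly_pos[OF t, of W] by simp
    have "(mat 1 + \<tau> *\<^sub>R laplacian W) ** Jmat W \<tau>
        = inverse (sigma_poly W \<tau>) *\<^sub>R ((mat 1 + \<tau> *\<^sub>R laplacian W) ** Q_poly W \<tau>)"
      unfolding Jmat_def by (rule mm_scaleR_right)
    also have "\<dots> = mat 1" unfolding poly_identity[OF assms(2,3)] using sp by simp
    finally show "Jmat W \<tau> = matrix_inv (mat 1 + \<tau> *\<^sub>R laplacian W)"
      using matrix_inv_eq by metis
  qed
  show "((\<lambda>\<tau>::real. matrix_inv (mat 1 + \<tau> *\<^sub>R laplacian W)) \<longlongrightarrow> Jtilde W) at_top"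
    using tendsto_cong[OF ev] J by simp
qed

end
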